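(* Let $L>0$, $0<\varepsilon<1$, $K$ an interval of $\mathbb{R}$ and $\mu$ a probability measure on $\mathbb{R}$. Assume that for some $\eta>0$ and all $E\in K$, either $\Im g_\mu(E+i\eta)\le L$ or $\mu([E-\frac\eta2,E+\frac\eta2])\le L\eta$. Then there exists a universal constant $c$ such that for any interval $I\subset K$ of length at least $\eta$ with $\mathrm{dist}(I,K^c)\ge\varepsilon$, $$\Big|\mu(I)-\frac1\pi\int_I\Im g_\mu(E+i\eta)\,dE\Big|\le c(L\vee\varepsilon^{-1})\,\eta\log\Big(1+\frac{|I|}{\eta}\Big).$$
   Context: $g_\mu(z)=\int\frac{\mu(dx)}{x-z}$ is the Cauchy–Stieltjes transform of $\mu$, for $z$ with $\Im z>0$; $|I|$ is the length of $I$. *)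

theory Defs
  imports "HOL-Probability.Probability"
begin

definition stieltjes :: "real measure \<Rightarrow> complex \<Rightarrow> complex" where
  "stieltjes M z = (LINT x|M. 1 / (complex_of_real x - z))"

end

theory Submission
  imports Defs
begin

lemma arctan_lip:
  fixes p q :: real assumes "q \<le> p" shows "arctan p - arctan q \<le> p - q"
proof (cases "q = p")
  case False
  with assms have "q < p" by simp
  from MVT2[OF this, of arctan "\<lambda>x. inverse (1 + x\<^sup>2)"]
  obtain z where "arctan p - arctan q = (p - q) * inverse (1 + z\<^sup>2)"
    using DERIV_arctan by blast
  moreover have "inverse (1 + z\<^sup>2) \<le> 1"
    by (simp add: inverse_le_1_iff)
  ultimately show ?thesis using \<open>q < p\<close>
    by (metis mult.right_neutral mult_left_mono diff_ge_0_iff_ge less_imp_le)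
qed simp

lemma arctan_pos_flip: assumes "(y::real) > 0" shows "arctan y = pi/2 - arctan (1/y)"
proof -
  have "arctan (1/y) = pi/2 - arctan y" using arctan_inverse[of y] assms by (simp add: inverse_eq_divide)
  thus ?thesis by linarith
qed

lemma arctan_diff_bound:
  fixes d l \<eta> :: real assumes "d > 0" "l \<ge> 0" "\<eta> > 0"
  shows "arctan ((d+l)/\<eta>) - arctan (d/\<eta>) \<le> \<eta>*l/(d*(d+l))"
proof -
  have "arctan ((d+l)/\<eta>) - arctan (d/\<eta>) = arctan (\<eta>/d) - arctan (\<eta>/(d+l))"
    using arctan_pos_flip[of "(d+l)/\<eta>"] arctan_pos_flip[of "d/\<eta>"] assms by simp
  also have "\<dots> \<le> \<eta>/d - \<eta>/(d+l)"
    by (rule arctan_lip) (use assms in \<open>simp add: frac_le\<close>)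
  also have "\<dots> = \<eta>*l/(d*(d+l))" using assms by (simp add: field_simps)
  finally show ?thesis .
qed

lemma arctan_le_self': "(y::real) \<ge> 0 \<Longrightarrow> arctan y \<le> y"
  using arctan_lip[of 0 y] by simp

lemma im_kernel:
  fixes x E \<eta> :: real assumes "\<eta> > 0"
  shows "Im (1 / (complex_of_real x - Complex E \<eta>)) = \<eta>/((x-E)\<^sup>2+\<eta>\<^sup>2)"
  using assms by (simp add: Im_divide power2_eq_square)

lemma norm_kernel:
  fixes x E \<eta> :: real assumes "\<eta> > 0"
  shows "norm (1 / (complex_of_real x - Complex E \<eta>)) \<le> 1/\<eta>"
proof -
  have "\<eta> \<le> norm (complex_of_real x - Complex E \<eta>)"
    using abs_Im_le_cmod[of "complex_of_real x - Complex E \<eta>"] assms by simp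
  then show ?thesis using assms by (simp add: norm_divide frac_le)
qed

lemma stieltjes_Im:
  fixes M :: "real measure" and E \<eta> :: real
  assumes P: "prob_space M" and S: "sets M = sets borel" and "\<eta> > 0"
  shows "Im (stieltjes M (Complex E \<eta>)) = (\<integral>x. \<eta>/((x-E)\<^sup>2+\<eta>\<^sup>2) \<partial>M)"
proof -
  interpret prob_space M by (fact P)
  have meas: "(\<lambda>x. 1 / (complex_of_real x - Complex E \<eta>)) \<in> borel_measurable M"
    unfolding measurable_cong_sets[OF S refl] by measurable
  have "integrable M (\<lambda>x. 1 / (complex_of_real x - Complex E \<eta>))"
    by (rule integrable_const_bound[where B="1/\<eta>"]) (use norm_kernel assms meas in auto)
  then have "Im (\<integral>x. 1 / (complex_of_real x - Complex E \<eta>) \<partial>M)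
     = (\<integral>x. Im (1 / (complex_of_real x - Complex E \<eta>)) \<partial>M)"
    by (rule integral_Im[symmetric])
  then show ?thesis unfolding stieltjes_def
    by (simp add: im_kernel[OF assms(3)])
qed

lemma fubini_k:
  fixes M :: "real measure" and \<eta> :: real and I :: "real set"
  assumes P: "prob_space M" and S: "sets M = sets borel" and "\<eta> > 0"
    and I: "I \<in> sets borel" and fin: "emeasure lborel I < \<infinity>"
  shows "(LINT E:I|lborel. (\<integral>x. \<eta>/((x-E)\<^sup>2+\<eta>\<^sup>2) \<partial>M))
       = (\<integral>x. (LINT E:I|lborel. \<eta>/((x-E)\<^sup>2+\<eta>\<^sup>2)) \<partial>M)"
proof -
  interpret M: prob_space M by (fact P)
  interpret pair_sigma_finite M lborel
    by (intro pair_sigma_finite.intro M.sigma_finite_measure_axioms lborel.sigma_finite_measure_axioms)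
  define f where "f = (\<lambda>x E. indicator I E * (\<eta>/((x-E)\<^sup>2+\<eta>\<^sup>2)) :: real)"
  have [measurable]: "I \<in> sets borel" by (fact I)
  have kb: "\<eta>/((x-E)\<^sup>2+\<eta>\<^sup>2) \<le> 1/\<eta>" for x E :: real
  proof -
    have "\<eta>/((x-E)\<^sup>2+\<eta>\<^sup>2) \<le> \<eta>/\<eta>\<^sup>2"
      by (rule frac_le) (use assms(3) in auto)
    also have "\<dots> = 1/\<eta>" using assms(3) by (simp add: power2_eq_square)
    finally show ?thesis .
  qed
  have kpos: "0 \<le> \<eta>/((x-E)\<^sup>2+\<eta>\<^sup>2)" for x E :: real
    using assms(3) by simp
  have fm: "case_prod f \<in> borel_measurable (M \<Otimes>\<^sub>M lborel)"
    unfolding measurable_cong_sets[OF sets_pair_measure_cong[OF S refl] refl] f_def by measurable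
  have intI: "integrable lborel (indicator I :: real \<Rightarrow> real)"
    using fin I by (intro integrable_real_indicator) auto
  have int2: "integrable lborel (\<lambda>E. f x E)" for x
  proof (rule Bochner_Integration.integrable_bound[OF integrable_mult_right[OF intI, of "1/\<eta>"]])
    show "(\<lambda>E. f x E) \<in> borel_measurable lborel" unfolding f_def by measurable
    show "AE E in lborel. norm (f x E) \<le> norm (1/\<eta> * indicator I E)"
      using kb kpos assms(3) by (auto simp: f_def indicator_def)
  qed
  have int1: "integrable M (\<lambda>x. \<integral>E. norm (f x E) \<partial>lborel)"
  proof (rule M.integrable_const_bound[where B="1/\<eta> * measure lborel I"])
    show "AE x in M. norm (\<integral>E. norm (f x E) \<partial>lborel) \<le> 1/\<eta> * measure lborel I"
    proof (intro AE_I2)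
      fix x
      have fnn: "0 \<le> f x E" for E using kpos[of x E] by (simp add: f_def indicator_def)
      have fle: "f x E \<le> 1/\<eta> * indicator I E" for E using kb by (simp add: f_def indicator_def)
      have "(\<integral>E. norm (f x E) \<partial>lborel) \<le> (\<integral>E. 1/\<eta> * indicator I E \<partial>lborel)"
      proof (rule integral_mono)
        show "integrable lborel (\<lambda>E. norm (f x E))" by (rule integrable_norm[OF int2])
        show "integrable lborel (\<lambda>E. 1/\<eta> * indicator I E :: real)" by (rule integrable_mult_right[OF intI])
        show "norm (f x E) \<le> 1/\<eta> * indicator I E" for E using fnn[of E] fle[of E] by simp
      qed
      also have "\<dots> = 1/\<eta> * measure lborel I" using fin I by simp
      finally show "norm (\<integral>E. norm (f x E) \<partial>lborel) \<le> 1/\<eta> * measure lborel I"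
        by simp
    qed
    show "(\<lambda>x. \<integral>E. norm (f x E) \<partial>lborel) \<in> borel_measurable M"
      using fm by measurable
  qed
  have intP: "integrable (M \<Otimes>\<^sub>M lborel) (case_prod f)"
    by (rule Fubini_integrable) (use fm int1 int2 in auto)
  have "(LINT E:I|lborel. (\<integral>x. \<eta>/((x-E)\<^sup>2+\<eta>\<^sup>2) \<partial>M)) = (\<integral>E. (\<integral>x. f x E \<partial>M) \<partial>lborel)"
    unfolding set_lebesgue_integral_def f_def real_scaleR_def
    by (intro Bochner_Integration.integral_cong refl integral_mult_right_zero[symmetric])
  also have "\<dots> = (\<integral>x. (\<integral>E. f x E \<partial>lborel) \<partial>M)"
    by (rule Fubini_integral[OF intP])
  also have "\<dots> = (\<integral>x. (LINT E:I|lborel. \<eta>/((x-E)\<^sup>2+\<eta>\<^sup>2)) \<partial>M)"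
    unfolding set_lebesgue_integral_def f_def by simp
  finally show ?thesis .
qed

lemma interval_ab:
  fixes I :: "real set" assumes iv: "is_interval I" and bd: "bounded I" and ne: "I \<noteq> {}"
  shows "{Inf I<..<Sup I} \<subseteq> I" "I \<subseteq> {Inf I..Sup I}"
proof -
  have bb: "bdd_below I" "bdd_above I" using bd bounded_imp_bdd_below bounded_imp_bdd_above by auto
  show "I \<subseteq> {Inf I..Sup I}" using bb by (auto intro: cInf_lower cSup_upper)
  show "{Inf I<..<Sup I} \<subseteq> I"
  proof
    fix x assume "x \<in> {Inf I<..<Sup I}"
    then have "Inf I < x" "x < Sup I" by auto
    then obtain y z where "y \<in> I" "y < x" "z \<in> I" "x < z"
      using cInf_less_iff[OF ne bb(1)] less_cSup_iff[OF ne bb(2)] by blast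
    then show "x \<in> I" using iv unfolding is_interval_1 by (meson less_imp_le)
  qed
qed

lemma measure_interval_ab:
  fixes I :: "real set" assumes "a \<le> b" "{a<..<b} \<subseteq> I" "I \<subseteq> {a..b}" "I \<in> sets borel"
  shows "emeasure lborel I = ennreal (b - a)" "measure lborel I = b - a"
proof -
  have "emeasure lborel {a<..<b} \<le> emeasure lborel I"
    by (rule emeasure_mono) (use assms in auto)
  moreover have "emeasure lborel I \<le> emeasure lborel {a..b}"
    by (rule emeasure_mono) (use assms in auto)
  ultimately show e: "emeasure lborel I = ennreal (b - a)" using assms(1) by simp
  show "measure lborel I = b - a" unfolding measure_def e using assms(1) by simp
qed

lemma P_formula:
  fixes I :: "real set" and a b x \<eta> :: real
  assumes "a \<le> b" "{a<..<b} \<subseteq> I" "I \<subseteq> {a..b}" "\<eta> > 0"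
  shows "(LINT E:I|lborel. \<eta>/((x-E)\<^sup>2+\<eta>\<^sup>2)) = arctan((b-x)/\<eta>) - arctan((a-x)/\<eta>)"
proof -
  have pos: "(x-E)\<^sup>2+\<eta>\<^sup>2 \<noteq> 0" for E using assms(4)
    by (metis add_nonneg_pos power_zero_numeral zero_less_power2 zero_le_power2 less_irrefl)
  have "(LINT E:I|lborel. \<eta>/((x-E)\<^sup>2+\<eta>\<^sup>2)) = (LINT E:{a..b}|lborel. \<eta>/((x-E)\<^sup>2+\<eta>\<^sup>2))"
  proof (rule set_integral_discrete_difference[where X="{a,b}"])
    show "(I - {a..b}) \<union> ({a..b} - I) \<subseteq> {a,b}"
    proof
      fix y assume y: "y \<in> (I - {a..b}) \<union> ({a..b} - I)"
      show "y \<in> {a,b}"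
      proof (rule ccontr)
        assume "y \<notin> {a,b}"
        with y assms(3) have "a < y" "y < b" "y \<notin> I" by auto
        with assms(2) show False by auto
      qed
    qed
  qed auto
  also have "\<dots> = (LBINT E=a..b. \<eta>/((x-E)\<^sup>2+\<eta>\<^sup>2))"
    by (rule interval_integral_Icc[symmetric]) fact
  also have "\<dots> = arctan((b-x)/\<eta>) - arctan((a-x)/\<eta>)"
  proof (rule interval_integral_FTC_finite)
    show "continuous_on {min a b..max a b} (\<lambda>E. \<eta>/((x-E)\<^sup>2+\<eta>\<^sup>2))"
      by (intro continuous_intros) (use pos in auto)
    fix E
    have "((\<lambda>E. arctan((E-x)/\<eta>)) has_real_derivative \<eta>/((x-E)\<^sup>2+\<eta>\<^sup>2)) (at E)"
    proof -
      have "((\<lambda>E. arctan((E-x)/\<eta>)) has_real_derivative inverse (1 + ((E-x)/\<eta>)\<^sup>2) * (1/\<eta>)) (at E)"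
        using assms(4) by (auto intro!: derivative_eq_intros)
      moreover have "inverse (1 + ((E-x)/\<eta>)\<^sup>2) * (1/\<eta>) = \<eta>/((x-E)\<^sup>2+\<eta>\<^sup>2)"
        using assms(4) pos[of E] by (simp add: field_simps power2_eq_square)
      ultimately show ?thesis by simp
    qed
    then show "((\<lambda>E. arctan((E-x)/\<eta>)) has_vector_derivative \<eta>/((x-E)\<^sup>2+\<eta>\<^sup>2)) (at E within {min a b..max a b})"
      by (simp add: has_real_derivative_iff_has_vector_derivative has_vector_derivative_at_within)
  qed
  finally show ?thesis .
qed

lemma window_bound:
  fixes M :: "real measure" and E \<eta> L :: real
  assumes P: "prob_space M" and S: "sets M = sets borel" and "\<eta> > 0" and "L \<ge> 0"
    and im: "Im (stieltjes M (Complex E \<eta>)) \<le> L"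
  shows "measure M {E - \<eta>/2 .. E + \<eta>/2} \<le> 2 * L * \<eta>"
proof -
  interpret prob_space M by (fact P)
  define W where "W = {E - \<eta>/2 .. E + \<eta>/2}"
  have W[measurable]: "W \<in> sets M" using S by (simp add: W_def)
  have kint: "integrable M (\<lambda>x. \<eta>/((x-E)\<^sup>2+\<eta>\<^sup>2))"
  proof (rule integrable_const_bound[where B="1/\<eta>"])
    show "AE x in M. norm (\<eta>/((x-E)\<^sup>2+\<eta>\<^sup>2)) \<le> 1/\<eta>"
    proof (intro AE_I2)
      fix x
      have "\<eta>/((x-E)\<^sup>2+\<eta>\<^sup>2) \<le> \<eta>/\<eta>\<^sup>2" by (rule frac_le) (use assms(3) in auto)
      also have "\<dots> = 1/\<eta>" using assms(3) by (simp add: power2_eq_square)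
      finally show "norm (\<eta>/((x-E)\<^sup>2+\<eta>\<^sup>2)) \<le> 1/\<eta>" using assms(3) by simp
    qed
    show "(\<lambda>x. \<eta>/((x-E)\<^sup>2+\<eta>\<^sup>2)) \<in> borel_measurable M"
      unfolding measurable_cong_sets[OF S refl] by measurable
  qed
  have "4/(5*\<eta>) * measure M W = (\<integral>x. 4/(5*\<eta>) * indicator W x \<partial>M)"
    by simp
  also have "\<dots> \<le> (\<integral>x. \<eta>/((x-E)\<^sup>2+\<eta>\<^sup>2) \<partial>M)"
  proof (rule integral_mono[OF _ kint])
    show "integrable M (\<lambda>x. 4/(5*\<eta>) * indicator W x :: real)"
      using W emeasure_finite[of W] by (intro integrable_mult_right integrable_real_indicator) (auto simp: less_top[symmetric])
    fix x
    show "4/(5*\<eta>) * indicator W x \<le> \<eta>/((x-E)\<^sup>2+\<eta>\<^sup>2)"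
    proof (cases "x \<in> W")
      case True
      then have xe: "x - E \<le> \<eta>/2 \<and> E - x \<le> \<eta>/2" by (auto simp: W_def)
      have "\<bar>x - E\<bar> \<le> \<eta>/2" unfolding abs_le_iff using xe by linarith
      then have "(x-E)\<^sup>2 \<le> (\<eta>/2)\<^sup>2" by (metis abs_ge_zero power_mono power2_abs)
      then have "(x-E)\<^sup>2+\<eta>\<^sup>2 \<le> 5*\<eta>\<^sup>2/4" by (simp add: power2_eq_square)
      then have "\<eta>/(5*\<eta>\<^sup>2/4) \<le> \<eta>/((x-E)\<^sup>2+\<eta>\<^sup>2)"
        by (intro frac_le) (use assms(3) in \<open>auto intro: add_nonneg_pos\<close>)
      moreover have "\<eta>/(5*\<eta>\<^sup>2/4) = 4/(5*\<eta>)" using assms(3) by (simp add: power2_eq_square field_simps)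
      ultimately show ?thesis using True by simp
    next
      case False then show ?thesis using assms(3) by simp
    qed
  qed
  also have "\<dots> = Im (stieltjes M (Complex E \<eta>))" using stieltjes_Im[OF P S assms(3)] by simp
  also have "\<dots> \<le> L" by (fact im)
  finally have "4/(5*\<eta>) * measure M W \<le> L" .
  then have "measure M W \<le> 5*\<eta>/4 * L" using assms(3) by (simp add: field_simps)
  also have "\<dots> \<le> 2 * L * \<eta>" using assms(3,4) by (simp add: mult_right_mono)
  finally show ?thesis by (simp add: W_def)
qed

definition Gf :: "real \<Rightarrow> real \<Rightarrow> real \<Rightarrow> real" where
  "Gf l \<eta> u = (if \<bar>u\<bar> \<le> \<eta> then 1 else min (\<eta>/\<bar>u\<bar>) (\<eta>*l/u\<^sup>2))"

definition vw :: "real \<Rightarrow> nat \<Rightarrow> real" where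
  "vw m j = (if j = 0 then 1 else min (2/real j) (4*m/(real j)\<^sup>2))"

lemma Gf_nonneg: "\<eta> > 0 \<Longrightarrow> l \<ge> 0 \<Longrightarrow> 0 \<le> Gf l \<eta> u"
  by (auto simp: Gf_def)

lemma Gf_le1: "\<eta> > 0 \<Longrightarrow> Gf l \<eta> u \<le> 1"
  by (auto simp: Gf_def min_le_iff_disj)

lemma Gf_inner:
  assumes "\<eta> > 0" "\<eta> < \<bar>u\<bar>" "\<bar>u\<bar> \<le> l"
  shows "Gf l \<eta> u = \<eta>/\<bar>u\<bar>"
proof -
  have "\<eta>/\<bar>u\<bar> \<le> \<eta>*l/u\<^sup>2"
  proof -
    have e: "\<bar>u\<bar> * \<bar>u\<bar> = u\<^sup>2" by (metis abs_mult_self_eq power2_eq_square)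
    have "\<eta>/\<bar>u\<bar> = \<eta>*\<bar>u\<bar>/(\<bar>u\<bar> * \<bar>u\<bar>)" using assms by (simp del: abs_mult_self_eq)
    then have "\<eta>/\<bar>u\<bar> = \<eta>*\<bar>u\<bar>/u\<^sup>2" unfolding e .
    also have "\<dots> \<le> \<eta>*l/u\<^sup>2" using assms by (intro divide_right_mono mult_left_mono) auto
    finally show ?thesis .
  qed
  then show ?thesis using assms by (simp add: Gf_def)
qed

lemma Gf_outer:
  assumes "\<eta> > 0" "\<eta> < d" "l \<ge> 0"
  shows "\<eta>*l/(d*(d+l)) \<le> Gf l \<eta> d"
proof -
  have d: "d > 0" using assms by simp
  have "\<eta>*l/(d*(d+l)) \<le> \<eta>/d"
  proof -
    have "\<eta>*l/(d*(d+l)) = (\<eta>/d) * (l/(d+l))" by simp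
    also have "\<dots> \<le> (\<eta>/d) * 1" using assms d by (intro mult_left_mono) auto
    finally show ?thesis by simp
  qed
  moreover have "\<eta>*l/(d*(d+l)) \<le> \<eta>*l/d\<^sup>2"
    unfolding power2_eq_square using assms d
    by (intro divide_left_mono mult_left_mono mult_pos_pos) auto
  ultimately show ?thesis using assms d by (simp add: Gf_def)
qed

lemma P_bounds:
  fixes a b x \<eta> :: real assumes "a \<le> b" "\<eta> > 0"
  shows "0 \<le> (arctan((b-x)/\<eta>) - arctan((a-x)/\<eta>))/pi"
        "(arctan((b-x)/\<eta>) - arctan((a-x)/\<eta>))/pi \<le> 1"
proof -
  have "(a-x)/\<eta> \<le> (b-x)/\<eta>" using assms by (intro divide_right_mono) auto
  then have "arctan((a-x)/\<eta>) \<le> arctan((b-x)/\<eta>)" by (rule arctan_monotone')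
  then show "0 \<le> (arctan((b-x)/\<eta>) - arctan((a-x)/\<eta>))/pi" by simp
  have "arctan((b-x)/\<eta>) - arctan((a-x)/\<eta>) \<le> pi"
    using arctan_bounded[of "(b-x)/\<eta>"] arctan_bounded[of "(a-x)/\<eta>"] by linarith
  then show "(arctan((b-x)/\<eta>) - arctan((a-x)/\<eta>))/pi \<le> 1" by simp
qed

lemma hbound:
  fixes a b x \<eta> :: real and I :: "real set"
  assumes ab: "a < b" and eta: "\<eta> > 0" "\<eta> \<le> b - a" and I: "{a<..<b} \<subseteq> I" "I \<subseteq> {a..b}"
  shows "\<bar>indicator I x - (arctan((b-x)/\<eta>) - arctan((a-x)/\<eta>))/pi\<bar> \<le> Gf (b-a) \<eta> (x-a) + Gf (b-a) \<eta> (x-b)"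
    and "\<bar>indicator I x - (arctan((b-x)/\<eta>) - arctan((a-x)/\<eta>))/pi\<bar> \<le> 1"
proof -
  define l where "l = b - a"
  define P where "P = (arctan((b-x)/\<eta>) - arctan((a-x)/\<eta>))/pi"
  have l: "l > 0" "\<eta> \<le> l" using assms by (auto simp: l_def)
  have P01: "0 \<le> P" "P \<le> 1" unfolding P_def using P_bounds[of a b \<eta> x] ab eta by auto
  have G0: "0 \<le> Gf l \<eta> (x-a)" "0 \<le> Gf l \<eta> (x-b)" using Gf_nonneg eta l by auto
  show h1: "\<bar>indicator I x - P\<bar> \<le> 1" using P01 by (auto simp: indicator_def)
  have pi1: "pi \<ge> 1" using pi_gt3 by simp
  have divpi: "y/pi \<le> y" if "y \<ge> 0" for y
    using that pi1 by (simp add: divide_le_eq mult_le_cancel_left1 order_trans[OF _ mult_right_mono[OF pi1]])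
  consider "\<bar>x-a\<bar> \<le> \<eta> \<or> \<bar>x-b\<bar> \<le> \<eta>" | "x < a - \<eta>" | "x > b + \<eta>" | "a + \<eta> < x \<and> x < b - \<eta>"
    by linarith
  then have "\<bar>indicator I x - P\<bar> \<le> Gf l \<eta> (x-a) + Gf l \<eta> (x-b)"
  proof cases
    case 1
    then have "1 \<le> Gf l \<eta> (x-a) + Gf l \<eta> (x-b)" using G0 by (auto simp: Gf_def)
    then show ?thesis using h1 by linarith
  next
    case 2
    define d where "d = a - x"
    have d: "d > \<eta>" using 2 by (simp add: d_def)
    have xI: "x \<notin> I" using I 2 eta by auto
    have e: "d + l = b - x" "d = a - x" by (simp_all add: d_def l_def)
    have "P * pi = arctan((d+l)/\<eta>) - arctan(d/\<eta>)"
      unfolding e(1) unfolding e(2) P_def by simp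
    also have "\<dots> \<le> \<eta>*l/(d*(d+l))" by (rule arctan_diff_bound) (use d l eta in auto)
    also have "\<dots> \<le> Gf l \<eta> d" by (rule Gf_outer) (use d l eta in auto)
    also have "Gf l \<eta> d = Gf l \<eta> (x-a)" by (simp add: Gf_def d_def abs_minus_commute power2_commute)
    finally have "P * pi \<le> Gf l \<eta> (x-a)" .
    moreover have "P \<le> P * pi" using P01 pi1 by (simp add: mult_le_cancel_left1)
    ultimately show ?thesis using xI P01 G0 by (simp add: indicator_def)
  next
    case 3
    define d where "d = x - b"
    have d: "d > \<eta>" using 3 by (simp add: d_def)
    have xI: "x \<notin> I" using I 3 eta by auto
    have e1: "(b-x)/\<eta> = - (d/\<eta>)" using eta by (simp add: d_def field_simps)
    have e2: "(a-x)/\<eta> = - ((d+l)/\<eta>)" using eta by (simp add: d_def l_def field_simps)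
    have "P * pi = arctan((d+l)/\<eta>) - arctan(d/\<eta>)"
      unfolding P_def e1 e2 arctan_minus by simp
    also have "\<dots> \<le> \<eta>*l/(d*(d+l))" by (rule arctan_diff_bound) (use d l eta in auto)
    also have "\<dots> \<le> Gf l \<eta> d" by (rule Gf_outer) (use d l eta in auto)
    also have "Gf l \<eta> d = Gf l \<eta> (x-b)" by (simp add: Gf_def d_def)
    finally have "P * pi \<le> Gf l \<eta> (x-b)" .
    moreover have "P \<le> P * pi" using P01 pi1 by (simp add: mult_le_cancel_left1)
    ultimately show ?thesis using xI P01 G0 by (simp add: indicator_def)
  next
    case 4
    have xI: "x \<in> I" using I 4 eta by auto
    have f1: "arctan((b-x)/\<eta>) = pi/2 - arctan(\<eta>/(b-x))"
      using arctan_pos_flip[of "(b-x)/\<eta>"] 4 eta by simp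
    have f2: "arctan((a-x)/\<eta>) = -(pi/2 - arctan(\<eta>/(x-a)))"
    proof -
      have "(a-x)/\<eta> = - ((x-a)/\<eta>)" using eta by (simp add: field_simps)
      then show ?thesis using arctan_pos_flip[of "(x-a)/\<eta>"] 4 eta by (simp add: arctan_minus)
    qed
    have "1 - P = (arctan(\<eta>/(b-x)) + arctan(\<eta>/(x-a)))/pi"
      unfolding P_def f1 f2 by (simp add: field_simps)
    also have "\<dots> \<le> arctan(\<eta>/(b-x)) + arctan(\<eta>/(x-a))"
      by (rule divpi) (use 4 eta arctan_monotone'[of 0 "\<eta>/(b-x)"] arctan_monotone'[of 0 "\<eta>/(x-a)"] in auto)
    also have "\<dots> \<le> \<eta>/(b-x) + \<eta>/(x-a)"
      using arctan_le_self'[of "\<eta>/(b-x)"] arctan_le_self'[of "\<eta>/(x-a)"] 4 eta by auto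
    also have "\<eta>/(b-x) = Gf l \<eta> (x-b)"
      using Gf_inner[of \<eta> "x-b" l] 4 eta by (simp add: l_def abs_minus_commute)
    also have "\<eta>/(x-a) = Gf l \<eta> (x-a)"
      using Gf_inner[of \<eta> "x-a" l] 4 eta by (simp add: l_def)
    finally show ?thesis using xI P01 by (simp add: indicator_def add.commute)
  qed
  then show "\<bar>indicator I x - (arctan((b-x)/\<eta>) - arctan((a-x)/\<eta>))/pi\<bar> \<le> Gf (b-a) \<eta> (x-a) + Gf (b-a) \<eta> (x-b)"
    by (simp add: P_def l_def)
qed

lemma finJ: assumes "\<eta> > 0" shows "finite {j::nat. real j * \<eta> < \<epsilon>}"
proof -
  obtain n where n: "\<epsilon>/\<eta> < real n" using reals_Archimedean2 by blast
  have "{j::nat. real j * \<eta> < \<epsilon>} \<subseteq> {..<n}"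
  proof
    fix j assume "j \<in> {j::nat. real j * \<eta> < \<epsilon>}"
    then have "real j < \<epsilon>/\<eta>" using assms by (simp add: field_simps)
    then show "j \<in> {..<n}" using n by simp
  qed
  then show ?thesis using finite_subset by blast
qed

lemma vw_nonneg: "m \<ge> 0 \<Longrightarrow> 0 \<le> vw m j"
  by (auto simp: vw_def)

lemma Gwin:
  fixes x c l \<eta> \<epsilon> :: real
  assumes eta: "\<eta> > 0" "\<eta> \<le> \<epsilon>" "\<eta> \<le> l"
  shows "Gf l \<eta> (x - c) \<le> (\<Sum>j\<in>{j. real j * \<eta> < \<epsilon>}. vw (l/\<eta>) j *
            (indicator {c + j*\<eta> - \<eta>/2 .. c + j*\<eta> + \<eta>/2} x + indicator {c - j*\<eta> - \<eta>/2 .. c - j*\<eta> + \<eta>/2} x))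
          + 2*\<eta>/\<epsilon>"
proof -
  define J where "J = {j::nat. real j * \<eta> < \<epsilon>}"
  define m where "m = l/\<eta>"
  have m1: "m \<ge> 1" using eta by (simp add: m_def)
  define T where "T j = vw m j * (indicator {c + j*\<eta> - \<eta>/2 .. c + j*\<eta> + \<eta>/2} x + indicator {c - j*\<eta> - \<eta>/2 .. c - j*\<eta> + \<eta>/2} x :: real)" for j
  have Tnn: "0 \<le> T j" for j using vw_nonneg[of m j] m1 by (simp add: T_def)
  have fJ: "finite J" using finJ eta by (simp add: J_def)
  have S0: "0 \<le> sum T J" using Tnn by (simp add: sum_nonneg)
  have ep: "\<epsilon> > 0" using eta by simp
  define u where "u = x - c"
  have "Gf l \<eta> u \<le> sum T J + 2*\<eta>/\<epsilon>"
  proof (cases "\<bar>u\<bar> \<ge> \<epsilon>/2")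
    case True
    have "Gf l \<eta> u \<le> 2*\<eta>/\<epsilon>"
    proof (cases "\<bar>u\<bar> \<le> \<eta>")
      case True2: True
      then have "\<epsilon> \<le> 2*\<eta>" using True by simp
      then have "1 \<le> 2*\<eta>/\<epsilon>" using ep by simp
      then show ?thesis using True2 by (simp add: Gf_def)
    next
      case False
      then have "Gf l \<eta> u \<le> \<eta>/\<bar>u\<bar>" by (simp add: Gf_def)
      also have "\<dots> \<le> \<eta>/(\<epsilon>/2)" using True eta ep by (intro divide_left_mono) auto
      also have "\<eta>/(\<epsilon>/2) = 2*\<eta>/\<epsilon>" by simp
      finally show ?thesis .
    qed
    then show ?thesis using S0 by simp
  next
    case False
    define j where "j = nat (round (\<bar>u\<bar>/\<eta>))"
    have r1: "of_int (round (\<bar>u\<bar>/\<eta>)) \<ge> \<bar>u\<bar>/\<eta> - 1/2" by (rule of_int_round_ge)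
    have r2: "of_int (round (\<bar>u\<bar>/\<eta>)) \<le> \<bar>u\<bar>/\<eta> + 1/2" by (rule of_int_round_le)
    have "0 \<le> \<bar>u\<bar>/\<eta>" using eta by simp
    then have rnn: "round (\<bar>u\<bar>/\<eta>) \<ge> 0" using r1 by linarith
    then have jr: "real j = of_int (round (\<bar>u\<bar>/\<eta>))" by (simp add: j_def)
    have j1: "real j * \<eta> \<ge> \<bar>u\<bar> - \<eta>/2" using r1 eta jr by (simp add: field_simps)
    have j2: "real j * \<eta> \<le> \<bar>u\<bar> + \<eta>/2" using r2 eta jr by (simp add: field_simps)
    have jJ: "j \<in> J" using j2 False eta by (simp add: J_def)
    have win: "indicator {c + j*\<eta> - \<eta>/2 .. c + j*\<eta> + \<eta>/2} x + indicator {c - j*\<eta> - \<eta>/2 .. c - j*\<eta> + \<eta>/2} x \<ge> (1::real)"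
    proof (cases "u \<ge> 0")
      case True
      then have "x \<in> {c + j*\<eta> - \<eta>/2 .. c + j*\<eta> + \<eta>/2}" using j1 j2 by (auto simp: u_def)
      then show ?thesis by (simp add: indicator_def)
    next
      case False
      then have "x \<in> {c - j*\<eta> - \<eta>/2 .. c - j*\<eta> + \<eta>/2}" using j1 j2 by (auto simp: u_def)
      then show ?thesis by (simp add: indicator_def)
    qed
    have Tj: "vw m j \<le> T j"
      using win vw_nonneg[of m j] m1 unfolding T_def by (simp add: mult_le_cancel_left1)
    have Gv: "Gf l \<eta> u \<le> vw m j"
    proof (cases "j = 0")
      case True then show ?thesis using Gf_le1[OF eta(1)] by (simp add: vw_def)
    next
      case False
      then have jj: "real j \<ge> 1" by simp
      have "\<eta> \<le> real j * \<eta>" using jj eta by simp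
      then have uj: "\<bar>u\<bar> \<ge> real j * \<eta> / 2" using j2 by linarith
      have ujp: "real j * \<eta> / 2 > 0" using jj eta by simp
      show ?thesis
      proof (cases "\<bar>u\<bar> \<le> \<eta>")
        case True
        then have "real j * \<eta> \<le> 2 * \<eta>" using uj by linarith
        then have "real j \<le> 2" by (rule mult_right_le_imp_le[OF _ eta(1)])
        then have "1 \<le> 2/real j" using jj by (simp add: field_simps)
        moreover have "1 \<le> 4*m/(real j)\<^sup>2"
        proof -
          have "(real j)\<^sup>2 \<le> 2\<^sup>2" by (rule power_mono[OF \<open>real j \<le> 2\<close>]) simp
          then have "(real j)\<^sup>2 \<le> 4*m" using m1 by simp
          moreover have "0 < (real j)\<^sup>2" using jj by simp
          ultimately show ?thesis by (simp add: le_divide_eq)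
        qed
        ultimately show ?thesis using True False by (simp add: Gf_def vw_def)
      next
        case True2: False
        have a1: "\<eta>/\<bar>u\<bar> \<le> 2/real j"
        proof -
          have "\<eta>/\<bar>u\<bar> \<le> \<eta>/(real j * \<eta> / 2)" using uj ujp eta by (intro divide_left_mono) auto
          also have "\<dots> = 2/real j" using eta by (simp add: field_simps)
          finally show ?thesis .
        qed
        have a2: "\<eta>*l/u\<^sup>2 \<le> 4*m/(real j)\<^sup>2"
        proof -
          have "(real j * \<eta> / 2)\<^sup>2 \<le> u\<^sup>2"
            using uj ujp by (metis abs_ge_zero less_imp_le power_mono power2_abs)
          moreover have p0: "0 < (real j * \<eta> / 2)\<^sup>2" using jj eta(1) by simp
          moreover have "0 \<le> \<eta>*l" using eta by simp
          moreover have "0 < u\<^sup>2 * (real j * \<eta> / 2)\<^sup>2"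
            using p0 calculation(1) by (intro mult_pos_pos) auto
          ultimately have "\<eta>*l/u\<^sup>2 \<le> \<eta>*l/(real j * \<eta> / 2)\<^sup>2" by (intro divide_left_mono) auto
          also have "\<dots> = 4*m/(real j)\<^sup>2" using eta jj by (simp add: m_def field_simps power2_eq_square)
          finally show ?thesis .
        qed
        have g: "Gf l \<eta> u = min (\<eta>/\<bar>u\<bar>) (\<eta>*l/u\<^sup>2)" using True2 by (simp add: Gf_def)
        have v: "vw m j = min (2/real j) (4*m/(real j)\<^sup>2)" using False by (simp add: vw_def)
        show ?thesis unfolding g v by (rule min.mono[OF a1 a2])
      qed
    qed
    have "T j \<le> sum T J" by (rule member_le_sum[OF jJ]) (use Tnn fJ in auto)
    moreover have "0 \<le> 2*\<eta>/\<epsilon>" using ep eta by simp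
    ultimately show ?thesis using Gv Tj by linarith
  qed
  then show ?thesis by (simp add: u_def T_def J_def m_def)
qed

lemma harm_bound: "(\<Sum>j\<in>{1..Suc n}. 1/real j) \<le> 1 + ln (real (Suc n))"
proof (induction n)
  case 0 then show ?case by simp
next
  case (Suc n)
  have "ln (real (Suc n) / real (Suc (Suc n))) \<le> real (Suc n) / real (Suc (Suc n)) - 1"
    by (rule ln_le_minus_one) simp
  then have "1/real (Suc (Suc n)) \<le> ln (real (Suc (Suc n))) - ln (real (Suc n))"
    by (simp add: ln_div field_simps)
  then show ?case using Suc by (simp add: sum.cl_ivl_Suc)
qed

lemma harm_bound': "p \<ge> 1 \<Longrightarrow> (\<Sum>j\<in>{1..p}. 1/real j) \<le> 1 + ln (real p)"
  using harm_bound[of "p - 1"] by simp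

lemma tail_bound: "p \<ge> 1 \<Longrightarrow> (\<Sum>j\<in>{Suc p..p+n}. 1/(real j)\<^sup>2) \<le> 1/real p - 1/real (p+n)"
proof (induction n)
  case 0 then show ?case by simp
next
  case (Suc n)
  define q where "q = real (p + n)"
  have q: "q \<ge> 1" using Suc.prems by (simp add: q_def)
  have e: "1/q - 1/(q+1) = 1/(q*(q+1))" using q by (simp add: field_simps)
  have "q*(q+1) \<le> (q+1)*(q+1)" using q by (intro mult_right_mono) auto
  then have "1/((q+1)*(q+1)) \<le> 1/(q*(q+1))" using q by (intro divide_left_mono) auto
  then have i1: "1/(q+1)\<^sup>2 \<le> 1/q - 1/(q+1)" unfolding e by (simp add: power2_eq_square)
  have s: "(\<Sum>j\<in>{Suc p..p+Suc n}. 1/(real j)\<^sup>2) = (\<Sum>j\<in>{Suc p..p+n}. 1/(real j)\<^sup>2) + 1/(real (Suc (p+n)))\<^sup>2"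
    by (subst add_Suc_right, subst sum.cl_ivl_Suc) simp
  have r: "real (Suc (p+n)) = q + 1" "real (p + Suc n) = q + 1" by (simp_all add: q_def)
  show ?case unfolding s r(1) r(2) using Suc.IH[OF Suc.prems] i1 unfolding q_def[symmetric] by linarith
qed

lemma vw_sum:
  assumes m: "m \<ge> 1" and fJ: "finite J"
  shows "(\<Sum>j\<in>J. vw m j) \<le> 11 + 2 * ln m"
proof -
  obtain N where N0: "\<forall>j\<in>J. j \<le> N" using fJ finite_nat_set_iff_bounded_le by auto
  have N: "J \<subseteq> {..N}" using N0 by auto
  define g where "g j = min (2/real j) (4*m/(real j)\<^sup>2)" for j :: nat
  have gnn: "0 \<le> g j" for j using m by (simp add: g_def)
  have "(\<Sum>j\<in>J. vw m j) \<le> (\<Sum>j\<in>{..N}. vw m j)"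
    by (rule sum_mono2) (use N vw_nonneg m in auto)
  also have "{..N} = insert 0 {1..N}" by auto
  also have "(\<Sum>j\<in>insert 0 {1..N}. vw m j) = 1 + (\<Sum>j\<in>{1..N}. g j)"
    by (simp add: vw_def g_def)
  finally have s1: "(\<Sum>j\<in>J. vw m j) \<le> 1 + (\<Sum>j\<in>{1..N}. g j)" .
  define p where "p = nat \<lfloor>m\<rfloor>"
  have fl: "\<lfloor>m\<rfloor> \<ge> 1" using m by (simp add: le_floor_iff)
  have rp: "real p = of_int \<lfloor>m\<rfloor>" using fl by (simp add: p_def)
  have p: "real p \<le> m" "m < real p + 1" "p \<ge> 1"
  proof -
    show "real p \<le> m" using rp of_int_floor_le[of m] by simp
    show "m < real p + 1" using rp real_of_int_floor_add_one_gt[of m] by simp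
    have "real p \<ge> 1" using rp fl by simp
    then show "p \<ge> 1" by simp
  qed
  have "(\<Sum>j\<in>{1..N}. g j) = (\<Sum>j\<in>{1..N} \<inter> {..p}. g j) + (\<Sum>j\<in>{1..N} - {..p}. g j)"
    by (rule sum.Int_Diff) simp
  also have "(\<Sum>j\<in>{1..N} \<inter> {..p}. g j) \<le> (\<Sum>j\<in>{1..p}. 2 * (1/real j))"
  proof -
    have "(\<Sum>j\<in>{1..N} \<inter> {..p}. g j) \<le> (\<Sum>j\<in>{1..p}. g j)"
      by (rule sum_mono2) (use gnn in auto)
    also have "\<dots> \<le> (\<Sum>j\<in>{1..p}. 2 * (1/real j))"
      by (rule sum_mono) (simp add: g_def)
    finally show ?thesis .
  qed
  also have "(\<Sum>j\<in>{1..N} - {..p}. g j) \<le> (\<Sum>j\<in>{Suc p..p+N}. 4*m * (1/(real j)\<^sup>2))"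
  proof -
    have "(\<Sum>j\<in>{1..N} - {..p}. g j) \<le> (\<Sum>j\<in>{Suc p..p+N}. g j)"
      by (rule sum_mono2) (use gnn in auto)
    also have "\<dots> \<le> (\<Sum>j\<in>{Suc p..p+N}. 4*m * (1/(real j)\<^sup>2))"
      by (rule sum_mono) (simp add: g_def)
    finally show ?thesis .
  qed
  finally have "(\<Sum>j\<in>{1..N}. g j) \<le> 2 * (\<Sum>j\<in>{1..p}. 1/real j) + 4*m * (\<Sum>j\<in>{Suc p..p+N}. 1/(real j)\<^sup>2)"
    by (simp add: sum_distrib_left)
  also have "\<dots> \<le> 2 * (1 + ln (real p)) + 4*m * (1/real p)"
  proof (intro add_mono mult_left_mono)
    show "(\<Sum>j\<in>{1..p}. 1/real j) \<le> 1 + ln (real p)" using harm_bound' p by simp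
    show "(\<Sum>j\<in>{Suc p..p+N}. 1/(real j)\<^sup>2) \<le> 1/real p"
      using tail_bound[of p N] p by (smt (verit) divide_nonneg_nonneg of_nat_0_le_iff)
  qed (use m in auto)
  also have "\<dots> \<le> 2 * (1 + ln m) + 8"
  proof -
    have h1: "2 * (1 + ln (real p)) \<le> 2 * (1 + ln m)" using p by simp
    have h2: "4*m * (1/real p) \<le> 8" using p by (simp add: field_simps)
    from add_mono[OF h1 h2] show ?thesis .
  qed
  finally show ?thesis using s1 by simp
qed

lemma int_window_sum:
  fixes M :: "real measure" and v :: "nat \<Rightarrow> real" and Wx Wy :: "nat \<Rightarrow> real set"
  assumes P: "prob_space M" and S: "sets M = sets borel" and fJ: "finite J"
    and vnn: "\<And>j. 0 \<le> v j" and Wb: "\<And>j. Wx j \<in> sets borel" "\<And>j. Wy j \<in> sets borel"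
    and Wm: "\<And>j. j \<in> J \<Longrightarrow> measure M (Wx j) \<le> A" "\<And>j. j \<in> J \<Longrightarrow> measure M (Wy j) \<le> A"
  shows "integrable M (\<lambda>x. \<Sum>j\<in>J. v j * (indicator (Wx j) x + indicator (Wy j) x))"
    and "(\<integral>x. (\<Sum>j\<in>J. v j * (indicator (Wx j) x + indicator (Wy j) x)) \<partial>M) \<le> 2 * A * (\<Sum>j\<in>J. v j)"
proof -
  interpret prob_space M by (fact P)
  have sp: "space M = UNIV" using sets_eq_imp_space_eq[OF S] by simp
  have ii: "integrable M (indicator W :: real \<Rightarrow> real)" if "W \<in> sets borel" for W
    using that S by (intro integrable_real_indicator) (auto simp: less_top[symmetric])
  have it: "integrable M (\<lambda>x. v j * (indicator (Wx j) x + indicator (Wy j) x) :: real)" for j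
  proof (rule integrable_mult_right)
    show "integrable M (\<lambda>x. indicator (Wx j) x + indicator (Wy j) x :: real)"
      by (rule Bochner_Integration.integrable_add[OF ii[OF Wb(1)] ii[OF Wb(2)]])
  qed
  show "integrable M (\<lambda>x. \<Sum>j\<in>J. v j * (indicator (Wx j) x + indicator (Wy j) x))"
    by (rule Bochner_Integration.integrable_sum) (rule it)
  have "(\<integral>x. (\<Sum>j\<in>J. v j * (indicator (Wx j) x + indicator (Wy j) x)) \<partial>M)
      = (\<Sum>j\<in>J. (\<integral>x. v j * (indicator (Wx j) x + indicator (Wy j) x) \<partial>M))"
    by (rule Bochner_Integration.integral_sum) (use it in auto)
  also have "\<dots> = (\<Sum>j\<in>J. v j * (measure M (Wx j) + measure M (Wy j)))"
  proof (rule sum.cong[OF refl])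
    fix j
    have "(\<integral>x. v j * (indicator (Wx j) x + indicator (Wy j) x) \<partial>M)
        = v j * ((\<integral>x. indicator (Wx j) x \<partial>M) + (\<integral>x. indicator (Wy j) x \<partial>M))"
      using ii[OF Wb(1)] ii[OF Wb(2)] by simp
    then show "(\<integral>x. v j * (indicator (Wx j) x + indicator (Wy j) x) \<partial>M) = v j * (measure M (Wx j) + measure M (Wy j))"
      by (simp add: sp)
  qed
  also have "\<dots> \<le> (\<Sum>j\<in>J. v j * (A + A))"
  proof (rule sum_mono)
    fix j assume j: "j \<in> J"
    show "v j * (measure M (Wx j) + measure M (Wy j)) \<le> v j * (A + A)"
      using Wm(1)[OF j] Wm(2)[OF j] vnn[of j] by (intro mult_left_mono) auto
  qed
  also have "\<dots> = 2 * A * (\<Sum>j\<in>J. v j)" by (simp add: sum_distrib_left sum_distrib_right algebra_simps)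
  finally show "(\<integral>x. (\<Sum>j\<in>J. v j * (indicator (Wx j) x + indicator (Wy j) x)) \<partial>M) \<le> 2 * A * (\<Sum>j\<in>J. v j)" .
qed

lemma inK:
  fixes I K :: "real set" and a b c \<epsilon> :: real
  assumes ab: "a < b" and sub: "{a<..<b} \<subseteq> I" and dK: "\<forall>x\<in>I. \<forall>y\<in>-K. dist x y \<ge> \<epsilon>"
    and c: "a - \<epsilon> < c" "c < b + \<epsilon>" and ep: "\<epsilon> > 0"
  shows "c \<in> K"
proof (rule ccontr)
  assume cK: "c \<notin> K"
  have "\<exists>y\<in>I. dist y c < \<epsilon>"
  proof (cases "c \<le> a")
    case True
    define y where "y = (a + min b (c+\<epsilon>))/2"
    have "a < y" "y < b" "y < c + \<epsilon>" "c < y" using ab c True by (auto simp: y_def)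
    then show ?thesis using sub by (intro bexI[of _ y]) (auto simp: dist_real_def)
  next
    case False
    show ?thesis
    proof (cases "c \<ge> b")
      case True
      define y where "y = (max a (c-\<epsilon>) + b)/2"
      have "a < y" "y < b" "c - \<epsilon> < y" "y < c" using ab c True by (auto simp: y_def)
      then show ?thesis using sub by (intro bexI[of _ y]) (auto simp: dist_real_def)
    next
      case False2: False
      have "c \<in> I" using sub False False2 by auto
      moreover note ep
      ultimately show ?thesis by (intro bexI[of _ c]) auto
    qed
  qed
  then show False using dK cK by force
qed

theorem lemma3p7:
  shows "\<exists>c::real. \<forall>(L::real) (\<epsilon>::real) (K::real set) (M::real measure) (\<eta>::real).
    L > 0 \<longrightarrow> 0 < \<epsilon> \<longrightarrow> \<epsilon> < 1 \<longrightarrow> is_interval K \<longrightarrow>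
    prob_space M \<longrightarrow> sets M = sets borel \<longrightarrow> \<eta> > 0 \<longrightarrow>
    (\<forall>E\<in>K. Im (stieltjes M (Complex E \<eta>)) \<le> L \<or>
            measure M {E - \<eta>/2 .. E + \<eta>/2} \<le> L * \<eta>) \<longrightarrow>
    (\<forall>I::real set. is_interval I \<longrightarrow> bounded I \<longrightarrow> I \<subseteq> K \<longrightarrow>
       measure lborel I \<ge> \<eta> \<longrightarrow>
       (\<forall>x\<in>I. \<forall>y\<in>-K. dist x y \<ge> \<epsilon>) \<longrightarrow>
       \<bar>measure M I - (1/pi) * (LINT E:I|lborel. Im (stieltjes M (Complex E \<eta>)))\<bar>
         \<le> c * max L (1/\<epsilon>) * \<eta> * ln (1 + measure lborel I / \<eta>))"
proof (rule exI[of _ 200], intro allI impI)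
  fix L \<epsilon> :: real and K :: "real set" and M :: "real measure" and \<eta> :: real and I :: "real set"
  assume L: "L > 0" and ep: "0 < \<epsilon>" "\<epsilon> < 1" and Kiv: "is_interval K"
    and P: "prob_space M" and S: "sets M = sets borel" and eta: "\<eta> > 0"
    and H: "\<forall>E\<in>K. Im (stieltjes M (Complex E \<eta>)) \<le> L \<or> measure M {E - \<eta>/2 .. E + \<eta>/2} \<le> L * \<eta>"
    and Iiv: "is_interval I" and Ibd: "bounded I" and IK: "I \<subseteq> K" and mI: "measure lborel I \<ge> \<eta>"
    and dK: "\<forall>x\<in>I. \<forall>y\<in>-K. dist x y \<ge> \<epsilon>"
  interpret prob_space M by (fact P)
  have sp: "space M = UNIV" using sets_eq_imp_space_eq[OF S] by simp
  have ne: "I \<noteq> {}" using mI eta by auto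
  define a where "a = Inf I"
  define b where "b = Sup I"
  have sub1: "{a<..<b} \<subseteq> I" and sub2: "I \<subseteq> {a..b}"
    using interval_ab[OF Iiv Ibd ne] by (auto simp: a_def b_def)
  have ab0: "a \<le> b" using ne sub2 by auto
  have Ib: "I \<in> sets borel" by (rule real_interval_borel_measurable[OF Iiv])
  have mIab: "measure lborel I = b - a" "emeasure lborel I = ennreal (b - a)"
    using measure_interval_ab[OF ab0 sub1 sub2 Ib] by auto
  define l where "l = b - a"
  have l: "\<eta> \<le> l" using mI mIab by (simp add: l_def)
  have ab: "a < b" using l eta by (simp add: l_def)
  have finI: "emeasure lborel I < \<infinity>" using mIab by simp
  define Pf where "Pf x = (arctan((b-x)/\<eta>) - arctan((a-x)/\<eta>))/pi" for x
  have Pf01: "0 \<le> Pf x" "Pf x \<le> 1" for x unfolding Pf_def using P_bounds[OF ab0 eta] by auto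
  have Pfm: "Pf \<in> borel_measurable M"
    unfolding measurable_cong_sets[OF S refl] Pf_def by measurable
  have Pfi: "integrable M Pf"
    by (rule integrable_const_bound[where B=1]) (use Pf01 Pfm in auto)
  have indi: "integrable M (indicator I :: real \<Rightarrow> real)"
    using Ib S by (intro integrable_real_indicator) (auto simp: less_top[symmetric])
  have eqP: "(1/pi) * (LINT E:I|lborel. Im (stieltjes M (Complex E \<eta>))) = (\<integral>x. Pf x \<partial>M)"
  proof -
    have "(LINT E:I|lborel. Im (stieltjes M (Complex E \<eta>)))
        = (LINT E:I|lborel. (\<integral>x. \<eta>/((x-E)\<^sup>2+\<eta>\<^sup>2) \<partial>M))"
      by (simp add: stieltjes_Im[OF P S eta])
    also have "\<dots> = (\<integral>x. (LINT E:I|lborel. \<eta>/((x-E)\<^sup>2+\<eta>\<^sup>2)) \<partial>M)"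
      by (rule fubini_k[OF P S eta Ib finI])
    also have "\<dots> = (\<integral>x. (arctan((b-x)/\<eta>) - arctan((a-x)/\<eta>)) \<partial>M)"
      by (rule Bochner_Integration.integral_cong[OF refl]) (rule P_formula[OF ab0 sub1 sub2 eta])
    finally show ?thesis unfolding Pf_def by simp
  qed
  have eqI: "measure M I = (\<integral>x. indicator I x \<partial>M)" by (simp add: sp)
  define h where "h x = \<bar>indicator I x - Pf x\<bar>" for x
  have hi: "integrable M h" unfolding h_def by (rule integrable_abs, rule Bochner_Integration.integrable_diff[OF indi Pfi])
  have LHS: "\<bar>measure M I - (1/pi) * (LINT E:I|lborel. Im (stieltjes M (Complex E \<eta>)))\<bar> \<le> (\<integral>x. h x \<partial>M)"
  proof -
    have "measure M I - (1/pi) * (LINT E:I|lborel. Im (stieltjes M (Complex E \<eta>)))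
        = (\<integral>x. (indicator I x - Pf x) \<partial>M)"
      unfolding eqP eqI using indi Pfi by simp
    then show ?thesis unfolding h_def by (simp only: integral_abs_bound)
  qed
  have h1: "h x \<le> 1" for x
    unfolding h_def Pf_def using hbound(2)[OF ab eta l[unfolded l_def] sub1 sub2] by simp
  have hG: "h x \<le> Gf l \<eta> (x-a) + Gf l \<eta> (x-b)" for x
    unfolding h_def Pf_def l_def using hbound(1)[OF ab eta l[unfolded l_def] sub1 sub2] by simp
  define Lam where "Lam = ln (1 + measure lborel I / \<eta>)"
  define m where "m = l/\<eta>"
  have m1: "m \<ge> 1" using l eta by (simp add: m_def)
  have Lam: "Lam = ln (1 + m)" by (simp add: Lam_def m_def mIab l_def)
  have Lam23: "2/3 \<le> Lam"
  proof -
    have "ln 2 \<le> ln (1 + m)" using m1 by simp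
    then show ?thesis using ln2_ge_two_thirds Lam by linarith
  qed
  have lnm: "ln m \<le> Lam" using m1 Lam by simp
  have mx: "L \<le> max L (1/\<epsilon>)" "1/\<epsilon> \<le> max L (1/\<epsilon>)" by auto
  have goalform: "200 * max L (1/\<epsilon>) * \<eta> * ln (1 + measure lborel I / \<eta>) = 200 * (max L (1/\<epsilon>) * (\<eta> * Lam))"
    by (simp add: Lam_def)
  show "\<bar>measure M I - (1/pi) * (LINT E:I|lborel. Im (stieltjes M (Complex E \<eta>)))\<bar>
         \<le> 200 * max L (1/\<epsilon>) * \<eta> * ln (1 + measure lborel I / \<eta>)"
  proof (cases "\<eta> \<le> \<epsilon>")
    case False
    have "(\<integral>x. h x \<partial>M) \<le> (\<integral>x. 1 \<partial>M)"
      by (rule integral_mono[OF hi]) (use h1 in auto)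
    also have "\<dots> = 1" by (simp add: prob_space)
    finally have i1: "(\<integral>x. h x \<partial>M) \<le> 1" .
    have "1 \<le> (1/\<epsilon>) * \<eta>" using False ep by (simp add: field_simps)
    also have "\<dots> \<le> max L (1/\<epsilon>) * \<eta>" using mx eta by (intro mult_right_mono) auto
    finally have q1: "1 \<le> max L (1/\<epsilon>) * \<eta>" .
    have "1 * (2/3) \<le> (max L (1/\<epsilon>) * \<eta>) * Lam"
      using q1 Lam23 by (intro mult_mono) auto
    then have "2/3 \<le> max L (1/\<epsilon>) * (\<eta> * Lam)" by (simp only: mult.assoc mult_1)
    then have "1 \<le> 200 * (max L (1/\<epsilon>) * (\<eta> * Lam))" by linarith
    then show ?thesis unfolding goalform using LHS i1 by linarith
  next
    case True
    define J where "J = {j::nat. real j * \<eta> < \<epsilon>}"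
    have fJ: "finite J" unfolding J_def by (rule finJ[OF eta])
    define Wp where "Wp c j = {c + real j*\<eta> - \<eta>/2 .. c + real j*\<eta> + \<eta>/2}" for c j
    define Wn where "Wn c j = {c - real j*\<eta> - \<eta>/2 .. c - real j*\<eta> + \<eta>/2}" for c j
    define S where "S c x = (\<Sum>j\<in>J. vw m j * (indicator (Wp c j) x + indicator (Wn c j) x))" for c x
    have wb: "measure M {E - \<eta>/2 .. E + \<eta>/2} \<le> 2*L*\<eta>" if "a - \<epsilon> < E" "E < b + \<epsilon>" for E
    proof -
      have "E \<in> K" by (rule inK[OF ab sub1 dK that ep(1)])
      then have "Im (stieltjes M (Complex E \<eta>)) \<le> L \<or> measure M {E - \<eta>/2 .. E + \<eta>/2} \<le> L * \<eta>"
        using H by blast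
      then show ?thesis
      proof
        assume im: "Im (stieltjes M (Complex E \<eta>)) \<le> L"
        show ?thesis using window_bound[OF P S eta _ im] L by simp
      next
        assume "measure M {E - \<eta>/2 .. E + \<eta>/2} \<le> L * \<eta>"
        moreover have "L * \<eta> \<le> 2 * L * \<eta>" using L eta by simp
        ultimately show ?thesis by linarith
      qed
    qed
    have Sc: "integrable M (S c) \<and> (\<integral>x. S c x \<partial>M) \<le> 2 * (2*L*\<eta>) * (\<Sum>j\<in>J. vw m j)"
      if c: "c = a \<or> c = b" for c
    proof -
      have mW: "measure M (Wp c j) \<le> 2*L*\<eta>" "measure M (Wn c j) \<le> 2*L*\<eta>" if "j \<in> J" for j
      proof -
        have jj: "real j * \<eta> < \<epsilon>" "0 \<le> real j * \<eta>" using that eta by (auto simp: J_def)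
        show "measure M (Wp c j) \<le> 2*L*\<eta>"
          unfolding Wp_def by (rule wb) (use jj c ab in auto)
        show "measure M (Wn c j) \<le> 2*L*\<eta>"
          unfolding Wn_def by (rule wb) (use jj c ab in auto)
      qed
      have Wb1: "Wp c j \<in> sets borel" "Wn c j \<in> sets borel" for j by (simp_all add: Wp_def Wn_def)
      have vnn: "0 \<le> vw m j" for j using vw_nonneg m1 by simp
      show ?thesis unfolding S_def
        using int_window_sum[where v="vw m" and Wx="Wp c" and Wy="Wn c" and A="2*L*\<eta>" and J=J,
            OF P S fJ vnn Wb1(1) Wb1(2) mW(1) mW(2)] by blast
    qed
    have Sa: "integrable M (S a)" "(\<integral>x. S a x \<partial>M) \<le> 2 * (2*L*\<eta>) * (\<Sum>j\<in>J. vw m j)" using Sc[of a] by auto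
    have Sb: "integrable M (S b)" "(\<integral>x. S b x \<partial>M) \<le> 2 * (2*L*\<eta>) * (\<Sum>j\<in>J. vw m j)" using Sc[of b] by auto
    have hS: "h x \<le> S a x + S b x + 4*\<eta>/\<epsilon>" for x
    proof -
      have "Gf l \<eta> (x - a) \<le> S a x + 2*\<eta>/\<epsilon>"
        using Gwin[OF eta True l, of x a] by (simp add: S_def Wp_def Wn_def J_def m_def)
      moreover have "Gf l \<eta> (x - b) \<le> S b x + 2*\<eta>/\<epsilon>"
        using Gwin[OF eta True l, of x b] by (simp add: S_def Wp_def Wn_def J_def m_def)
      ultimately show ?thesis using hG[of x] by simp
    qed
    have "(\<integral>x. h x \<partial>M) \<le> (\<integral>x. S a x + S b x + 4*\<eta>/\<epsilon> \<partial>M)"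
      by (rule integral_mono[OF hi]) (use Sa Sb hS in auto)
    also have "\<dots> = (\<integral>x. S a x \<partial>M) + (\<integral>x. S b x \<partial>M) + 4*\<eta>/\<epsilon>"
      using Sa(1) Sb(1) by (simp add: prob_space)
    finally have i1: "(\<integral>x. h x \<partial>M) \<le> 8*L*\<eta>*(\<Sum>j\<in>J. vw m j) + 4*\<eta>/\<epsilon>"
      using Sa(2) Sb(2) by simp
    have vs: "(\<Sum>j\<in>J. vw m j) \<le> 19 * Lam" using vw_sum[OF m1 fJ] lnm Lam23 by linarith
    define X where "X = \<eta> * Lam"
    have X0: "0 \<le> X" using eta Lam23 by (simp add: X_def)
    have B1: "8*L*\<eta>*(\<Sum>j\<in>J. vw m j) \<le> 152 * (L * X)"
    proof -
      have "8*L*\<eta>*(\<Sum>j\<in>J. vw m j) \<le> 8*L*\<eta>*(19*Lam)"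
        using vs L eta by (intro mult_left_mono) auto
      also have "\<dots> = 152 * (L * X)" by (simp add: X_def)
      finally show ?thesis .
    qed
    have B2: "4*\<eta>/\<epsilon> \<le> 6 * ((1/\<epsilon>) * X)"
    proof -
      have "(\<eta>/\<epsilon>) * 4 \<le> (\<eta>/\<epsilon>) * (6*Lam)" using Lam23 eta ep by (intro mult_left_mono) auto
      then show ?thesis by (simp add: X_def field_simps)
    qed
    have B3: "L * X \<le> max L (1/\<epsilon>) * X" using mx X0 by (intro mult_right_mono) auto
    have B4: "(1/\<epsilon>) * X \<le> max L (1/\<epsilon>) * X" using mx X0 by (intro mult_right_mono) auto
    have B5: "0 \<le> max L (1/\<epsilon>) * X" using L X0 by simp
    show ?thesis unfolding goalform X_def[symmetric] using LHS i1 B1 B2 B3 B4 B5 by linarith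
  qed
qed

end
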